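(* Let $G$ be a simple graph with $n$ vertices, let $S(G)$ be its Seidel matrix, and let $\theta_1,\ldots,\theta_n$ be the eigenvalues of $S(G)$. Then the following are equivalent: (i) $|\det S(G)|\ge n-1$; (ii) for every $\alpha$ with $0<\alpha<2$, $$|\theta_1|^\alpha+\cdots+|\theta_n|^\alpha\ge (n-1)^\alpha+(n-1).$$
   Context: For a simple graph $G$ with vertex set $\{v_1,\ldots,v_n\}$, the Seidel matrix $S(G)=(s_{ij})$ is the $n\times n$ matrix with $s_{ii}=0$ for all $i$, and for $i\ne j$, $s_{ij}=-1$ if $v_i$ and $v_j$ are adjacent and $s_{ij}=1$ otherwise. It is a real symmetric matrix, so its eigenvalues are real. *)

theory Defs
  imports "Jordan_Normal_Form.Determinant" "Jordan_Normal_Form.Char_Poly"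
begin

definition simple_graph :: "nat \<Rightarrow> (nat \<Rightarrow> nat \<Rightarrow> bool) \<Rightarrow> bool" where
  "simple_graph n E \<longleftrightarrow> (\<forall>i<n. \<not> E i i) \<and> (\<forall>i<n. \<forall>j<n. E i j \<longleftrightarrow> E j i)"

definition seidel_matrix :: "nat \<Rightarrow> (nat \<Rightarrow> nat \<Rightarrow> bool) \<Rightarrow> real mat" where
  "seidel_matrix n E = mat n n (\<lambda>(i, j). if i = j then 0 else if E i j then -1 else 1)"

end

theory Submission
  imports Defs "Jordan_Normal_Form.Schur_Decomposition" "HOL-Analysis.Convex" "HOL-Analysis.Derivative"
begin

definition tr :: "real mat \<Rightarrow> real" where
  "tr A = (\<Sum>i<dim_row A. A $$ (i,i))"

lemma tr_comm:
  assumes A: "A \<in> carrier_mat n n" and B: "B \<in> carrier_mat n n"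
  shows "tr (A * B) = tr (B * A)"
proof -
  have "tr (A * B) = (\<Sum>i<n. \<Sum>k<n. A $$ (i,k) * B $$ (k,i))"
    using A B unfolding tr_def by (auto simp: scalar_prod_def atLeast0LessThan intro!: sum.cong)
  also have "\<dots> = (\<Sum>k<n. \<Sum>i<n. B $$ (k,i) * A $$ (i,k))"
    by (subst sum.swap) (simp add: mult.commute)
  also have "\<dots> = tr (B * A)"
    using A B unfolding tr_def by (auto simp: scalar_prod_def atLeast0LessThan intro!: sum.cong)
  finally show ?thesis .
qed

lemma tr_upper_sq:
  assumes B: "B \<in> carrier_mat n n" and ut: "upper_triangular B"
  shows "tr (B * B) = (\<Sum>i<n. (B $$ (i,i))^2)"
proof -
  have "tr (B * B) = (\<Sum>i<n. \<Sum>k<n. B $$ (i,k) * B $$ (k,i))"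
    using B unfolding tr_def by (auto simp: scalar_prod_def atLeast0LessThan intro!: sum.cong)
  also have "\<dots> = (\<Sum>i<n. \<Sum>k\<in>{i}. B $$ (i,k) * B $$ (k,i))"
  proof (rule sum.cong[OF refl], rule sum.mono_neutral_right)
    fix i assume i: "i \<in> {..<n}"
    show "\<forall>k\<in>{..<n} - {i}. B $$ (i, k) * B $$ (k, i) = 0"
    proof
      fix k assume k: "k \<in> {..<n} - {i}"
      show "B $$ (i, k) * B $$ (k, i) = 0"
      proof (cases "k < i")
        case True then show ?thesis using ut B i by (auto simp: upper_triangular_def)
      next
        case False then have "i < k" using k by auto
        then show ?thesis using ut B k by (auto simp: upper_triangular_def)
      qed
    qed
  qed auto
  finally show ?thesis by (simp add: power2_eq_square)
qed

lemma seidel_facts: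
  assumes sg: "simple_graph n E" and len: "length \<theta> = n"
    and cp: "char_poly (seidel_matrix n E) = (\<Prod>a\<leftarrow>\<theta>. [:- a, 1:])"
  shows "det (seidel_matrix n E) = prod_list \<theta>"
    and "sum_list (map (\<lambda>a. a^2) \<theta>) = real n * (real n - 1)"
proof -
  let ?S = "seidel_matrix n E"
  have S: "?S \<in> carrier_mat n n" unfolding seidel_matrix_def by auto
  obtain B P Q where sch: "schur_decomposition ?S \<theta> = (B,P,Q)" by (cases "schur_decomposition ?S \<theta>") auto
  from schur_decomposition[OF S cp sch]
  have wit: "similar_mat_wit ?S B P Q" and ut: "upper_triangular B" and dg: "diag_mat B = \<theta>" by auto
  from wit S have B: "B \<in> carrier_mat n n" and P: "P \<in> carrier_mat n n" and Q: "Q \<in> carrier_mat n n"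
    and QP: "Q * P = 1\<^sub>m n"
    unfolding similar_mat_wit_def Let_def by auto
  have "det ?S = det B" using wit by (intro det_similar) (auto simp: similar_mat_def)
  also have "\<dots> = prod_list \<theta>" using det_upper_triangular[OF ut B] dg by simp
  finally show "det ?S = prod_list \<theta>" .
  have pw: "?S ^\<^sub>m 2 = P * B ^\<^sub>m 2 * Q" by (rule similar_mat_wit_pow_id[OF wit])
  have sq: "\<And>A::real mat. A ^\<^sub>m 2 = A * A" by (simp add: numeral_2_eq_2)
  have BB: "B * B \<in> carrier_mat n n" using B by auto
  have "tr (?S * ?S) = tr (P * (B * B) * Q)" using pw by (simp add: sq)
  also have "\<dots> = tr (Q * (P * (B * B)))" using P BB Q by (intro tr_comm) auto
  also have "Q * (P * (B * B)) = (Q * P) * (B * B)" using P BB Q by simp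
  also have "\<dots> = B * B" using QP BB by (simp add: left_mult_one_mat)
  finally have t1: "tr (?S * ?S) = tr (B * B)" .
  have t2: "tr (B * B) = sum_list (map (\<lambda>a. a^2) \<theta>)"
    unfolding tr_upper_sq[OF B ut] dg[symmetric]
    using B by (simp add: diag_mat_def sum_list_sum_nth atLeast0LessThan)
  have "tr (?S * ?S) = (\<Sum>i<n. \<Sum>k<n. ?S $$ (i,k) * ?S $$ (k,i))"
    using S unfolding tr_def by (auto simp: scalar_prod_def atLeast0LessThan intro!: sum.cong)
  also have "\<dots> = (\<Sum>i<n. \<Sum>k<n. if k = i then 0 else 1)"
    using sg unfolding seidel_matrix_def simple_graph_def by (auto intro!: sum.cong)
  also have "\<dots> = (\<Sum>i<n. real n - 1)"
  proof (rule sum.cong[OF refl])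
    fix i assume "i \<in> {..<n}"
    then have i: "i < n" by simp
    have e: "{..<n} \<inter> - {i} = {..<n} - {i}" by auto
    have "card ({..<n} - {i}) = n - 1" using i by (simp add: card_Diff_singleton)
    then show "(\<Sum>k<n. if k = i then 0 else 1) = real n - 1"
      using i by (simp add: sum.If_cases e of_nat_diff)
  qed
  also have "\<dots> = real n * (real n - 1)" by simp
  finally show "sum_list (map (\<lambda>a. a^2) \<theta>) = real n * (real n - 1)" using t1 t2 by simp
qed

definition phi :: "real \<Rightarrow> real" where "phi u = exp u - 1 - u"

lemma exp_gt_lin: assumes "(x::real) \<noteq> 0" shows "1 + x < exp x"
proof (cases "1 + x / 2 \<ge> 0")
  case True
  have "(1 + x/2)^2 \<le> exp (x/2) ^ 2"
    using True exp_ge_add_one_self[of "x/2"] by (intro power_mono) auto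
  also have "exp (x/2) ^ 2 = exp x" by (simp add: exp_double[symmetric])
  finally have "(1 + x/2)^2 \<le> exp x" .
  moreover have "(1 + x/2)^2 = 1 + x + x^2/4" by (simp add: power2_eq_square field_simps)
  moreover have "x^2 > 0" using assms by simp
  ultimately show ?thesis by linarith
next
  case False
  then have "1 + x < 0" by linarith
  then show ?thesis using exp_gt_zero[of x] by linarith
qed

lemma phi_pos: "u \<noteq> 0 \<Longrightarrow> phi u > 0"
  unfolding phi_def using exp_gt_lin[of u] by simp

lemma phi_nonneg: "phi u \<ge> 0"
  unfolding phi_def using exp_ge_add_one_self[of u] by linarith

lemma phi_beta_lt:
  assumes b: "0 < \<beta>" "\<beta> < 1" and L: "0 < L"
  shows "phi (\<beta> * L) < \<beta>^2 * phi L"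
proof -
  define E where "E y = phi (\<beta> * y) - \<beta>^2 * phi y" for y
  define E' where "E' y = \<beta> * (exp (\<beta> * y) - 1) - \<beta>^2 * (exp y - 1)" for y
  define E'' where "E'' y = \<beta>^2 * exp (\<beta> * y) - \<beta>^2 * exp y" for y
  have dE: "DERIV E y :> E' y" for y
    unfolding E_def E'_def phi_def by (auto intro!: derivative_eq_intros simp: power2_eq_square algebra_simps)
  have dE': "DERIV E' y :> E'' y" for y
    unfolding E''_def E'_def by (auto intro!: derivative_eq_intros simp: power2_eq_square algebra_simps)
  have E''neg: "E'' y < 0" if "y > 0" for y
  proof -
    have "\<beta> * y < y" using that b by simp
    then have "exp (\<beta> * y) < exp y" by simp
    then show ?thesis unfolding E''_def using b by (simp add: algebra_simps)
  qed
  have E'neg: "E' t < 0" if t: "t > 0" for t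
  proof -
    obtain z where z: "0 < z" "z < t" "E' t - E' 0 = (t - 0) * E'' z"
      using MVT2[of 0 t E' E''] dE' t by auto
    have "E' 0 = 0" unfolding E'_def by simp
    with z E''neg[of z] t show ?thesis by (simp add: mult_pos_neg)
  qed
  obtain z where z: "0 < z" "z < L" "E L - E 0 = (L - 0) * E' z"
    using MVT2[of 0 L E E'] dE L by auto
  have "E 0 = 0" unfolding E_def phi_def by simp
  with z E'neg[of z] L have "E L < 0" by (simp add: mult_pos_neg)
  then show ?thesis unfolding E_def by simp
qed

lemma key_ineq:
  assumes b: "0 < \<beta>" "\<beta> < 1" and L: "0 < L" and y: "y \<le> L"
  shows "phi (\<beta> * y) * phi L \<ge> phi (\<beta> * L) * phi y"
proof -
  define K where "K = phi L"
  define M where "M = phi (\<beta> * L)"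
  have K: "K > 0" unfolding K_def using L by (intro phi_pos) simp
  have M: "M > 0" unfolding M_def using L b by (intro phi_pos) simp
  have MK: "M < \<beta>^2 * K" unfolding M_def K_def by (rule phi_beta_lt[OF b L])
  define D where "D y = phi (\<beta> * y) * K - M * phi y" for y
  define D' where "D' y = \<beta> * (exp (\<beta> * y) - 1) * K - M * (exp y - 1)" for y
  define D'' where "D'' y = \<beta>^2 * exp (\<beta> * y) * K - M * exp y" for y
  have dD: "DERIV D y :> D' y" for y
    unfolding D_def D'_def phi_def by (auto intro!: derivative_eq_intros simp: power2_eq_square algebra_simps)
  have dD': "DERIV D' y :> D'' y" for y
    unfolding D''_def D'_def by (auto intro!: derivative_eq_intros simp: power2_eq_square algebra_simps)
  define z0 where "z0 = ln (\<beta>^2 * K / M) / (1 - \<beta>)"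
  have r1: "\<beta>^2 * K / M > 1" using MK M by simp
  have z0: "z0 > 0" unfolding z0_def using r1 b by (intro divide_pos_pos) auto
  define r where "r = \<beta>^2 * K / M"
  have r0: "r > 0" using r1 unfolding r_def by simp
  have eb: "exp ((1 - \<beta>) * y) * exp (\<beta> * y) = exp y" for y
    by (simp add: exp_add[symmetric] algebra_simps)
  have z0r: "(1 - \<beta>) * z0 = ln r" unfolding z0_def r_def using b by simp
  have D''ge: "D'' y \<ge> 0" if "y \<le> z0" for y
  proof -
    have "(1 - \<beta>) * y \<le> (1 - \<beta>) * z0" using that b by (intro mult_left_mono) auto
    then have "exp ((1 - \<beta>) * y) \<le> exp (ln r)" using z0r by simp
    then have "exp ((1 - \<beta>) * y) \<le> r" using r0 by simp
    then have "M * exp ((1 - \<beta>) * y) \<le> \<beta>^2 * K" using M unfolding r_def by (simp add: pos_le_divide_eq mult.commute)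
    then have "M * exp ((1 - \<beta>) * y) * exp (\<beta> * y) \<le> \<beta>^2 * K * exp (\<beta> * y)"
      by (intro mult_right_mono) auto
    then have "M * exp y \<le> \<beta>^2 * K * exp (\<beta> * y)" using eb[of y] by (simp add: mult.assoc)
    then show ?thesis unfolding D''_def by (simp add: mult.commute mult.left_commute)
  qed
  have D''le: "D'' y \<le> 0" if "y \<ge> z0" for y
  proof -
    have "(1 - \<beta>) * y \<ge> (1 - \<beta>) * z0" using that b by (intro mult_left_mono) auto
    then have "exp ((1 - \<beta>) * y) \<ge> exp (ln r)" using z0r by simp
    then have "exp ((1 - \<beta>) * y) \<ge> r" using r0 by simp
    then have "M * exp ((1 - \<beta>) * y) \<ge> \<beta>^2 * K" using M unfolding r_def by (simp add: pos_divide_le_eq mult.commute)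
    then have "M * exp ((1 - \<beta>) * y) * exp (\<beta> * y) \<ge> \<beta>^2 * K * exp (\<beta> * y)"
      by (intro mult_right_mono) auto
    then have "M * exp y \<ge> \<beta>^2 * K * exp (\<beta> * y)" using eb[of y] by (simp add: mult.assoc)
    then show ?thesis unfolding D''_def by (simp add: mult.commute mult.left_commute)
  qed
  have D0: "D 0 = 0" unfolding D_def phi_def by simp
  have D'0: "D' 0 = 0" unfolding D'_def by simp
  have DL: "D L = 0" unfolding D_def K_def M_def by simp
  have cvx: "convex_on {..z0} D"
    by (rule f''_ge0_imp_convex[of _ _ D' D'']) (use dD dD' D''ge z0 in auto)
  have reg1: "D y \<ge> 0" if "y \<le> z0" for y
  proof -
    have "0 \<in> interior {..z0}" using z0 by simp
    have "D y - D 0 \<ge> D' 0 * (y - 0)"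
      by (rule convex_on_imp_above_tangent[OF cvx]) 
         (use z0 that dD in \<open>auto intro: has_field_derivative_at_within\<close>)
    with D0 D'0 show ?thesis by simp
  qed
  have ccv: "concave_on {z0..L} D"
    by (rule f''_le0_imp_concave[of _ _ D' D'']) (use dD dD' D''le z0 in auto)
  have reg2: "D y \<ge> 0" if "z0 \<le> y" "y \<le> L" for y
  proof -
    have "D y \<ge> (D z0 - D L) / (L - z0) * (L - y) + D L"
      using concave_onD_Icc''[OF ccv, of y] that by simp
    moreover have "(D z0 - D L) / (L - z0) * (L - y) \<ge> 0"
      using reg1[of z0] DL z0 that by (intro mult_nonneg_nonneg divide_nonneg_nonneg) auto
    ultimately show ?thesis using DL by simp
  qed
  have "D y \<ge> 0" using reg1 reg2 y by (cases "y \<le> z0") auto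
  then show ?thesis unfolding D_def K_def M_def by (simp add: mult.commute)
qed


lemma phi_mono: assumes "0 \<le> u" "u \<le> v" shows "phi u \<le> phi v"
proof -
  have e: "exp u * exp (v - u) = exp v" by (simp add: exp_add[symmetric])
  have d: "exp (v - u) - 1 \<ge> v - u" using exp_ge_add_one_self[of "v - u"] by linarith
  have "exp u * (exp (v - u) - 1) \<ge> 1 * (exp (v - u) - 1)"
    using d assms by (intro mult_right_mono) auto
  then have "exp v - exp u \<ge> v - u" using d e by (simp add: algebra_simps)
  then show ?thesis unfolding phi_def by simp
qed

lemma main_ineq:
  fixes t :: "nat \<Rightarrow> real" and n :: nat and \<alpha> :: real
  assumes n2: "n \<ge> 2"
    and sq: "(\<Sum>i<n. (t i)^2) = real n * (real n - 1)"
    and pr: "\<bar>\<Prod>i<n. t i\<bar> \<ge> real n - 1"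
    and a: "0 < \<alpha>" "\<alpha> < 2"
  shows "(\<Sum>i<n. \<bar>t i\<bar> powr \<alpha>) \<ge> (real n - 1) powr \<alpha> + (real n - 1)"
proof -
  define N where "N = real n - 1"
  have N: "N \<ge> 1" unfolding N_def using n2 by simp
  have nz: "t i \<noteq> 0" if "i < n" for i
  proof
    assume "t i = 0"
    then have "(\<Prod>i<n. t i) = 0" using that by (intro prod_zero) auto
    with pr N show False unfolding N_def by simp
  qed
  define \<beta> where "\<beta> = \<alpha> / 2"
  have b: "0 < \<beta>" "\<beta> < 1" unfolding \<beta>_def using a by auto
  define L where "L = 2 * ln N"
  have L0: "L \<ge> 0" unfolding L_def using N by simp
  define y where "y i = 2 * ln \<bar>t i\<bar>" for i
  have ey: "exp (y i) = (t i)^2" if "i < n" for i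
  proof -
    have "exp (y i) = exp (ln \<bar>t i\<bar>) ^ 2" unfolding y_def by (simp add: exp_double[symmetric] mult.commute) 
    also have "\<dots> = (t i)^2" using nz[OF that] by simp
    finally show ?thesis .
  qed
  have eL: "exp L = N^2"
  proof -
    have "exp L = exp (ln N) ^ 2" unfolding L_def by (simp add: exp_double[symmetric] mult.commute) 
    also have "\<dots> = N^2" using N by simp
    finally show ?thesis .
  qed
  have pw: "\<bar>t i\<bar> powr \<alpha> = exp (\<beta> * y i)" if "i < n" for i
    using nz[OF that] unfolding powr_def y_def \<beta>_def by simp
  have pwN: "N powr \<alpha> = exp (\<beta> * L)"
    using N unfolding powr_def L_def \<beta>_def by simp
  have sy: "(\<Sum>i<n. y i) \<ge> L"
  proof -
    have "(\<Sum>i<n. y i) = 2 * ln (\<Prod>i<n. \<bar>t i\<bar>)"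
      unfolding y_def using nz by (subst ln_prod) (auto simp: sum_distrib_left)
    also have "\<dots> = 2 * ln \<bar>\<Prod>i<n. t i\<bar>" using prod_norm[of t "{..<n}"] by simp
    also have "\<dots> \<ge> 2 * ln N" using pr N unfolding N_def by (subst mult_le_cancel_left_pos) (auto intro: ln_mono)
    finally show ?thesis unfolding L_def .
  qed
  have LHS: "(\<Sum>i<n. \<bar>t i\<bar> powr \<alpha>) = (\<Sum>i<n. exp (\<beta> * y i))"
    using pw by simp
  have goal: "(\<Sum>i<n. exp (\<beta> * y i)) \<ge> exp (\<beta> * L) + N"
  proof (cases "\<exists>i<n. y i \<ge> L")
    case True
    then obtain i0 where i0: "i0 < n" "y i0 \<ge> L" by auto
    have e1: "(\<Sum>i<n. exp (\<beta> * y i)) = (\<Sum>i<n. 1 + \<beta> * y i) + (\<Sum>i<n. phi (\<beta> * y i))"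
    proof -
      have "(\<Sum>i<n. exp (\<beta> * y i)) = (\<Sum>i<n. (1 + \<beta> * y i) + phi (\<beta> * y i))"
        unfolding phi_def by simp
      then show ?thesis by (simp only: sum.distrib)
    qed
    have e2: "(\<Sum>i<n. 1 + \<beta> * y i) = real n + \<beta> * (\<Sum>i<n. y i)"
      by (simp add: sum.distrib sum_distrib_left)
    have e3: "(\<Sum>i<n. phi (\<beta> * y i)) \<ge> phi (\<beta> * y i0)"
      using i0 by (intro member_le_sum) (auto simp: phi_nonneg)
    have e4: "phi (\<beta> * y i0) \<ge> phi (\<beta> * L)"
      using i0 b L0 by (intro phi_mono mult_left_mono) auto
    have e5: "\<beta> * (\<Sum>i<n. y i) \<ge> \<beta> * L" using sy b by simp
    have "(\<Sum>i<n. exp (\<beta> * y i)) \<ge> real n + \<beta> * L + phi (\<beta> * L)"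
      using e1 e2 e3 e4 e5 by linarith
    then show ?thesis unfolding phi_def N_def by simp
  next
    case False
    then have yl: "y i < L" if "i < n" for i using that by auto
    have Lpos: "L > 0"
    proof (rule ccontr)
      assume "\<not> L > 0"
      then have "y i < 0" if "i < n" for i using yl[OF that] L0 by simp
      then have "(\<Sum>i<n. y i) < (\<Sum>i<n. 0)" using n2 by (intro sum_strict_mono) (auto simp: lessThan_empty_iff)
      with sy L0 \<open>\<not> L > 0\<close> show False by simp
    qed
    define B where "B = phi (\<beta> * L) / phi L"
    define C where "C = \<beta> - B"
    have pL: "phi L > 0" using Lpos by (intro phi_pos) simp
    have BL: "phi (\<beta> * L) = B * phi L" unfolding B_def using pL by simp
    have C0: "C \<ge> 0"
    proof -
      have "phi (\<beta> * L) < \<beta>^2 * phi L" by (rule phi_beta_lt[OF b Lpos])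
      also have "\<dots> \<le> \<beta> * phi L" using b pL by (intro mult_right_mono) (auto simp: power2_eq_square)
      finally have "B < \<beta>" unfolding B_def using pL by (simp add: field_simps)
      then show ?thesis unfolding C_def by simp
    qed
    have elem: "exp (\<beta> * y i) \<ge> 1 + B * (exp (y i) - 1) + C * y i" if "i < n" for i
    proof -
      have "phi (\<beta> * y i) * phi L \<ge> phi (\<beta> * L) * phi (y i)"
        using key_ineq[OF b Lpos, of "y i"] yl[OF that] by simp
      then have "phi (\<beta> * y i) \<ge> B * phi (y i)" unfolding BL using pL
        by (simp add: mult.commute mult.left_commute)
      then show ?thesis unfolding phi_def C_def by (simp add: algebra_simps)
    qed
    have "(\<Sum>i<n. exp (\<beta> * y i)) \<ge> (\<Sum>i<n. 1 + B * (exp (y i) - 1) + C * y i)"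
      using elem by (intro sum_mono) auto
    also have "(\<Sum>i<n. 1 + B * (exp (y i) - 1) + C * y i)
        = real n + B * ((\<Sum>i<n. exp (y i)) - real n) + C * (\<Sum>i<n. y i)"
      by (simp add: sum.distrib sum_distrib_left sum_subtractf algebra_simps)
    also have "(\<Sum>i<n. exp (y i)) = real n * (real n - 1)" using ey sq by simp
    finally have "(\<Sum>i<n. exp (\<beta> * y i)) \<ge> real n + B * (real n * (real n - 1) - real n) + C * L"
      using C0 sy by (smt (verit) mult_left_mono)
    moreover have "real n * (real n - 1) - real n = N^2 - 1" unfolding N_def by (simp add: power2_eq_square algebra_simps)
    ultimately have X: "(\<Sum>i<n. exp (\<beta> * y i)) \<ge> real n + B * (N^2 - 1) + C * L" by simp
    have "exp (\<beta> * L) = 1 + B * (exp L - 1) + C * L"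
      using BL unfolding phi_def C_def by (simp add: algebra_simps)
    then have "exp (\<beta> * L) = 1 + B * (N^2 - 1) + C * L" using eL by simp
    with X show ?thesis unfolding N_def by simp
  qed
  show ?thesis using goal LHS pwN unfolding N_def by simp
qed


lemma dir2:
  fixes t :: "nat \<Rightarrow> real" and n :: nat
  assumes n2: "n \<ge> 2" and pr: "\<bar>\<Prod>i<n. t i\<bar> < real n - 1"
  shows "\<exists>\<alpha>. 0 < \<alpha> \<and> \<alpha> < 2 \<and> (\<Sum>i<n. \<bar>t i\<bar> powr \<alpha>) < (real n - 1) powr \<alpha> + (real n - 1)"
proof -
  define N where "N = real n - 1"
  have N: "N \<ge> 1" unfolding N_def using n2 by simp
  define c where "c i = (if t i = 0 then 0 else (1::real))" for i
  define w where "w i = ln \<bar>t i\<bar>" for i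
  define d where "d x = (\<Sum>i<n. c i * exp (x * w i)) - exp (x * ln N) - N" for x
  define d' where "d' x = (\<Sum>i<n. c i * (w i * exp (x * w i))) - ln N * exp (x * ln N)" for x
  have dd: "DERIV d x :> d' x" for x
    unfolding d_def d'_def by (auto intro!: derivative_eq_intros simp: algebra_simps)
  have dval: "d x = (\<Sum>i<n. \<bar>t i\<bar> powr x) - (N powr x + N)" for x
  proof -
    have "\<bar>t i\<bar> powr x = c i * exp (x * w i)" for i
      unfolding c_def w_def powr_def by (simp add: mult.commute)
    moreover have "N powr x = exp (x * ln N)" using N unfolding powr_def by (simp add: mult.commute)
    ultimately show ?thesis unfolding d_def by simp
  qed
  have "\<exists>r>0. \<forall>h. 0 < h \<and> h < r \<longrightarrow> d h < 0"
  proof (cases "\<exists>i<n. t i = 0")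
    case True
    then obtain i0 where i0: "i0 < n" "t i0 = 0" by auto
    have "(\<Sum>i<n. c i) = c i0 + (\<Sum>i\<in>{..<n} - {i0}. c i)"
      using i0 by (subst sum.remove[of _ i0]) auto
    also have "(\<Sum>i\<in>{..<n} - {i0}. c i) \<le> of_nat (card ({..<n} - {i0})) * 1"
      by (rule sum_bounded_above) (auto simp: c_def)
    also have "card ({..<n} - {i0}) = n - 1" using i0 by (simp add: card_Diff_singleton)
    finally have "(\<Sum>i<n. c i) \<le> real (n - 1)" using i0 by (simp add: c_def)
    then have d0: "d 0 < 0" unfolding d_def N_def using n2 by (simp add: of_nat_diff)
    have "isCont d 0" using dd by (rule DERIV_isCont)
    then have "d \<midarrow>0\<rightarrow> d 0" by (simp add: isCont_def)
    from LIM_fun_less_zero[OF this d0] obtain r where r: "r > 0" "\<forall>x. x \<noteq> 0 \<and> \<bar>0 - x\<bar> < r \<longrightarrow> d x < 0"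
      by auto
    then show ?thesis by (intro exI[of _ r]) auto
  next
    case False
    then have nz: "t i \<noteq> 0" if "i < n" for i using that by auto
    have d0: "d 0 = 0" unfolding d_def N_def using nz by (simp add: c_def)
    have "d' 0 = (\<Sum>i<n. ln \<bar>t i\<bar>) - ln N" unfolding d'_def c_def w_def using nz by simp
    also have "(\<Sum>i<n. ln \<bar>t i\<bar>) = ln (\<Prod>i<n. \<bar>t i\<bar>)" using nz by (subst ln_prod) auto
    also have "(\<Prod>i<n. \<bar>t i\<bar>) = \<bar>\<Prod>i<n. t i\<bar>" using prod_norm[of t "{..<n}"] by simp
    finally have "d' 0 = ln \<bar>\<Prod>i<n. t i\<bar> - ln N" .
    moreover have "(\<Prod>i<n. t i) \<noteq> 0" using nz by simp
    then have "ln \<bar>\<Prod>i<n. t i\<bar> < ln N" using pr unfolding N_def by (intro ln_less_cancel_iff[THEN iffD2]) auto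
    ultimately have "d' 0 < 0" by simp
    from DERIV_neg_dec_right[OF dd this] obtain r where "r > 0" "\<forall>h>0. h < r \<longrightarrow> d (0 + h) < d 0"
      by auto
    then show ?thesis using d0 by (intro exI[of _ r]) auto
  qed
  then obtain r where r: "r > 0" "\<And>h. 0 < h \<Longrightarrow> h < r \<Longrightarrow> d h < 0" by auto
  define h where "h = min (r/2) 1"
  have h: "0 < h" "h < r" "h < 2" unfolding h_def using r by auto
  show ?thesis using r(2)[OF h(1,2)] h dval[of h] unfolding N_def by (intro exI[of _ h]) auto
qed

lemma prod_list_nth: "prod_list xs = (\<Prod>i<length xs. xs ! i)"
proof (induction xs)
  case Nil then show ?case by simp
next
  case (Cons a xs) then show ?case by (simp only: length_Cons prod.lessThan_Suc_shift) simp
qed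

lemma sum_list_map_nth: "sum_list (map f xs) = (\<Sum>i<length xs. f (xs ! i))"
  by (simp add: sum_list_sum_nth atLeast0LessThan)

theorem theorem1p1:
  fixes n :: nat and E :: "nat \<Rightarrow> nat \<Rightarrow> bool" and \<theta> :: "real list"
  assumes "simple_graph n E"
    and "length \<theta> = n"
    and "char_poly (seidel_matrix n E) = (\<Prod>a\<leftarrow>\<theta>. [:- a, 1:])"
  shows "\<bar>det (seidel_matrix n E)\<bar> \<ge> real (n - 1) \<longleftrightarrow>
         (\<forall>\<alpha>::real. 0 < \<alpha> \<and> \<alpha> < 2 \<longrightarrow>
            (\<Sum>a\<leftarrow>\<theta>. \<bar>a\<bar> powr \<alpha>) \<ge> real (n - 1) powr \<alpha> + real (n - 1))"
proof -
  note F = seidel_facts[OF assms]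
  define t where "t i = \<theta> ! i" for i
  have D: "det (seidel_matrix n E) = (\<Prod>i<n. t i)"
    using F(1) assms(2) by (simp add: prod_list_nth t_def)
  have SQ: "(\<Sum>i<n. (t i)^2) = real n * (real n - 1)"
    using F(2) assms(2) by (simp add: sum_list_map_nth t_def)
  have SP: "(\<Sum>a\<leftarrow>\<theta>. \<bar>a\<bar> powr \<alpha>) = (\<Sum>i<n. \<bar>t i\<bar> powr \<alpha>)" for \<alpha>
    using assms(2) by (simp add: sum_list_map_nth t_def)
  show ?thesis
  proof (cases "n \<ge> 2")
    case True
    have rn: "real (n - 1) = real n - 1" using True by (simp add: of_nat_diff)
    show ?thesis
    proof
      assume "\<bar>det (seidel_matrix n E)\<bar> \<ge> real (n - 1)"
      then have pr: "\<bar>\<Prod>i<n. t i\<bar> \<ge> real n - 1" using D rn by simp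
      show "\<forall>\<alpha>::real. 0 < \<alpha> \<and> \<alpha> < 2 \<longrightarrow>
            (\<Sum>a\<leftarrow>\<theta>. \<bar>a\<bar> powr \<alpha>) \<ge> real (n - 1) powr \<alpha> + real (n - 1)"
        using main_ineq[OF True SQ pr] unfolding SP rn by blast
    next
      assume H: "\<forall>\<alpha>::real. 0 < \<alpha> \<and> \<alpha> < 2 \<longrightarrow>
            (\<Sum>a\<leftarrow>\<theta>. \<bar>a\<bar> powr \<alpha>) \<ge> real (n - 1) powr \<alpha> + real (n - 1)"
      show "\<bar>det (seidel_matrix n E)\<bar> \<ge> real (n - 1)"
      proof (rule ccontr)
        assume "\<not> ?thesis"
        then have "\<bar>\<Prod>i<n. t i\<bar> < real n - 1" using D rn by simp
        from dir2[OF True this] obtain \<alpha> where "0 < \<alpha>" "\<alpha> < 2"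
          "(\<Sum>i<n. \<bar>t i\<bar> powr \<alpha>) < (real n - 1) powr \<alpha> + (real n - 1)" by auto
        with H show False unfolding SP rn by force
      qed
    qed
  next
    case False
    then have n01: "n = 0 \<or> n = 1" by auto
    then have z: "real (n - 1) = 0" by auto
    have "t i = 0" if "i < n" for i
    proof -
      have "(\<Sum>i<n. (t i)^2) = 0" using SQ n01 by auto
      then have "\<forall>i\<in>{..<n}. (t i)^2 = 0" by (subst sum_nonneg_eq_0_iff[symmetric]) auto
      then show ?thesis using that by auto
    qed
    then have "(\<Sum>i<n. \<bar>t i\<bar> powr \<alpha>) = 0" for \<alpha> by simp
    then show ?thesis unfolding SP z by simp
  qed
qed

end
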